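(* Let $(M^n,g)$ be a Riemannian manifold with Levi-Civita connection which is semisymmetric, i.e. $[\nabla_a,\nabla_b] R_{cdef}=0$. Then $$R_{abc}{}^m R_{dme}{}^f+R_{bcd}{}^m R_{ame}{}^f+R_{cda}{}^m R_{bme}{}^f+R_{dab}{}^m R_{cme}{}^f - R_{ace}{}^m R_{bdm}{}^f + R_{acm}{}^f R_{bde}{}^m =0,$$ $$R_{am}R_{bce}{}^m + R_{bm}R_{cae}{}^m+ R_{cm}R_{abe}{}^m =0,$$ $$R_{am} R_{bec}{}^m - R_{bm}R_{ace}{}^m + R_{cm} R_{eba}{}^m -R_{em} R_{cab}{}^m =0 .$$
   Context: Abstract index notation with Einstein summation; indices lowered with $g$, $R_{abcd}=R_{abc}{}^eg_{ed}$. $R_{abc}{}^d = \partial_a \Gamma_{bc}^d - \partial_b\Gamma_{ac}^d - \Gamma_{ac}^k\Gamma_{bk}^d + \Gamma_{ak}^d \Gamma_{bc}^k$, $R_{ac}=R_{abc}{}^b$, $[\nabla_a,\nabla_b]=\nabla_a\nabla_b-\nabla_b\nabla_a$. *)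

theory Defs
  imports "HOL-Analysis.Analysis"
begin

text \<open>Local-coordinate description of a Riemannian metric on an open set
  U of R^n (index type 'n, points real^'n). The metric is g x :: real^'n^'n,
  g_ij(x) = g x $ i $ j.\<close>

definition partial :: "'n::finite \<Rightarrow> (real^'n \<Rightarrow> real) \<Rightarrow> real^'n \<Rightarrow> real" where
  "partial i f x = frechet_derivative f (at x) (axis i 1)"

fun partials :: "'n::finite list \<Rightarrow> (real^'n \<Rightarrow> real) \<Rightarrow> real^'n \<Rightarrow> real" where
  "partials [] f = f"
| "partials (i # is) f = partial i (partials is f)"

definition smooth_on :: "(real^'n::finite) set \<Rightarrow> (real^'n \<Rightarrow> real) \<Rightarrow> bool" where
  "smooth_on U f \<longleftrightarrow> (\<forall>is. \<forall>x\<in>U. partials is f differentiable (at x))"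

definition riemannian_metric_on :: "(real^'n::finite) set \<Rightarrow> (real^'n \<Rightarrow> real^'n^'n) \<Rightarrow> bool" where
  "riemannian_metric_on U g \<longleftrightarrow> open U \<and>
     (\<forall>i j. smooth_on U (\<lambda>x. g x $ i $ j)) \<and>
     (\<forall>x\<in>U. transpose (g x) = g x \<and> (\<forall>v. v \<noteq> 0 \<longrightarrow> v \<bullet> (g x *v v) > 0))"

definition ginv :: "(real^'n::finite \<Rightarrow> real^'n^'n) \<Rightarrow> real^'n \<Rightarrow> 'n \<Rightarrow> 'n \<Rightarrow> real" where
  "ginv g x i j = matrix_inv (g x) $ i $ j"

definition christoffel :: "(real^'n::finite \<Rightarrow> real^'n^'n) \<Rightarrow> real^'n \<Rightarrow> 'n \<Rightarrow> 'n \<Rightarrow> 'n \<Rightarrow> real" where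
  "christoffel g x a b c = (1/2) * (\<Sum>d\<in>UNIV. ginv g x c d *
      (partial a (\<lambda>y. g y $ b $ d) x + partial b (\<lambda>y. g y $ a $ d) x
       - partial d (\<lambda>y. g y $ a $ b) x))"

definition Rup :: "(real^'n::finite \<Rightarrow> real^'n^'n) \<Rightarrow> real^'n \<Rightarrow> 'n \<Rightarrow> 'n \<Rightarrow> 'n \<Rightarrow> 'n \<Rightarrow> real" where
  "Rup g x a b c d =
     partial a (\<lambda>y. christoffel g y b c d) x - partial b (\<lambda>y. christoffel g y a c d) x
     - (\<Sum>k\<in>UNIV. christoffel g x a c k * christoffel g x b k d)
     + (\<Sum>k\<in>UNIV. christoffel g x a k d * christoffel g x b c k)"

definition Rdown :: "(real^'n::finite \<Rightarrow> real^'n^'n) \<Rightarrow> real^'n \<Rightarrow> 'n \<Rightarrow> 'n \<Rightarrow> 'n \<Rightarrow> 'n \<Rightarrow> real" where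
  "Rdown g x a b c d = (\<Sum>e\<in>UNIV. Rup g x a b c e * g x $ e $ d)"

definition Ric :: "(real^'n::finite \<Rightarrow> real^'n^'n) \<Rightarrow> real^'n \<Rightarrow> 'n \<Rightarrow> 'n \<Rightarrow> real" where
  "Ric g x a c = (\<Sum>b\<in>UNIV. Rup g x a b c b)"

definition cov_deriv :: "(real^'n::finite \<Rightarrow> real^'n^'n) \<Rightarrow> (real^'n \<Rightarrow> 'n list \<Rightarrow> real)
    \<Rightarrow> real^'n \<Rightarrow> 'n list \<Rightarrow> real" where
  "cov_deriv g T x idx = (case idx of [] \<Rightarrow> 0
     | b # l \<Rightarrow> partial b (\<lambda>y. T y l) x
         - (\<Sum>p<length l. \<Sum>k\<in>UNIV. christoffel g x b (l ! p) k * T x (l[p := k])))"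

definition semisymmetric_on :: "(real^'n::finite) set \<Rightarrow> (real^'n \<Rightarrow> real^'n^'n) \<Rightarrow> bool" where
  "semisymmetric_on U g \<longleftrightarrow>
    (let T = (\<lambda>y l. Rdown g y (l!0) (l!1) (l!2) (l!3));
         NN = cov_deriv g (cov_deriv g T)
     in \<forall>x\<in>U. \<forall>a b c d e f. NN x [a,b,c,d,e,f] - NN x [b,a,c,d,e,f] = 0)"

end

theory Submission
  imports Defs
begin


lemma partial_has: "(f has_derivative f') (at x) \<Longrightarrow> partial i f x = f' (axis i 1)"
  unfolding partial_def using frechet_derivative_at by metis

lemma has_partial: "f differentiable (at x) \<Longrightarrow> (f has_derivative frechet_derivative f (at x)) (at x)"
  using frechet_derivative_works by blast

lemma partial_cong:
  assumes "open U" "x \<in> U" "\<And>y. y \<in> U \<Longrightarrow> f y = h y"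
  shows "partial i f x = partial i h x"
proof -
  have "\<And>f'. (f has_derivative f') (at x) \<longleftrightarrow> (h has_derivative f') (at x)"
    using has_derivative_transform_within_open[of f _ x UNIV U h]
      has_derivative_transform_within_open[of h _ x UNIV U f] assms by auto
  then show ?thesis unfolding partial_def frechet_derivative_def by simp
qed

lemma diff_cong:
  assumes "open U" "x \<in> U" "\<And>y. y \<in> U \<Longrightarrow> f y = h y" "f differentiable (at x)"
  shows "h differentiable (at x)"
  using has_derivative_transform_within_open[of f _ x UNIV U h] assms
  unfolding differentiable_def by auto

lemma partial_add:
  assumes "f differentiable (at x)" "h differentiable (at x)"
  shows "partial i (\<lambda>y. f y + h y) x = partial i f x + partial i h x"
  using partial_has[OF has_derivative_add[OF has_partial[OF assms(1)] has_partial[OF assms(2)]]]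
    partial_has[OF has_partial[OF assms(1)]] partial_has[OF has_partial[OF assms(2)]]
  by simp

lemma partial_diff:
  assumes "f differentiable (at x)" "h differentiable (at x)"
  shows "partial i (\<lambda>y. f y - h y) x = partial i f x - partial i h x"
  using partial_has[OF has_derivative_diff[OF has_partial[OF assms(1)] has_partial[OF assms(2)]]]
    partial_has[OF has_partial[OF assms(1)]] partial_has[OF has_partial[OF assms(2)]]
  by simp

lemma partial_mult:
  assumes "f differentiable (at x)" "h differentiable (at x)"
  shows "partial i (\<lambda>y. f y * h y) x = f x * partial i h x + partial i f x * h x"
  using partial_has[OF has_derivative_mult[OF has_partial[OF assms(1)] has_partial[OF assms(2)]]]
    partial_has[OF has_partial[OF assms(1)]] partial_has[OF has_partial[OF assms(2)]]
  by simp

lemma partial_sum: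
  assumes "\<And>a. a \<in> A \<Longrightarrow> f a differentiable (at x)"
  shows "partial i (\<lambda>y. \<Sum>a\<in>A. f a y) x = (\<Sum>a\<in>A. partial i (f a) x)"
proof -
  have "((\<lambda>y. \<Sum>a\<in>A. f a y) has_derivative (\<lambda>v. \<Sum>a\<in>A. frechet_derivative (f a) (at x) v)) (at x)"
    by (rule has_derivative_sum) (use assms has_partial in auto)
  from partial_has[OF this] show ?thesis
    using partial_has[OF has_partial[OF assms]] by simp
qed

lemma partial_const: "partial i (\<lambda>y. c) x = 0"
  unfolding partial_def by simp

lemma partial_divide:
  assumes "f differentiable (at x)" "h differentiable (at x)" "h x \<noteq> 0"
  shows "partial i (\<lambda>y. f y / h y) x = (partial i f x * h x - f x * partial i h x) / (h x * h x)"
  using partial_has[OF has_derivative_divide'[OF has_partial[OF assms(1)] has_partial[OF assms(2)] assms(3)]]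
    partial_has[OF has_partial[OF assms(1)]] partial_has[OF has_partial[OF assms(2)]]
  by simp

lemma partials_snoc: "partials (is @ [i]) f = partials is (partial i f)"
  by (induct "is") auto

lemma smooth_diff_at: "smooth_on U f \<Longrightarrow> x \<in> U \<Longrightarrow> f differentiable (at x)"
  unfolding smooth_on_def using partials.simps(1) by metis

lemma smooth_partial: "smooth_on U f \<Longrightarrow> smooth_on U (partial i f)"
  unfolding smooth_on_def by (metis partials_snoc)

lemma smooth_coind:
  fixes Q :: "(real^'n::finite \<Rightarrow> real) \<Rightarrow> bool"
  assumes "Q f"
    and step: "\<And>k. Q k \<Longrightarrow> (\<forall>x\<in>U. k differentiable (at x)) \<and> (\<forall>i. Q (partial i k))"
  shows "smooth_on U f"
proof -
  have "\<forall>k. Q k \<longrightarrow> (\<forall>x\<in>U. partials is k differentiable (at x))" for "is"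
  proof (induct "is" rule: rev_induct)
    case Nil then show ?case using step by simp
  next
    case (snoc i js) then show ?case using step by (simp add: partials_snoc)
  qed
  then show ?thesis unfolding smooth_on_def using assms(1) by blast
qed

lemma smooth_cong:
  fixes U :: "(real^'n::finite) set"
  assumes "open U" "smooth_on U f" "\<And>y. y \<in> U \<Longrightarrow> f y = h y"
  shows "smooth_on U h"
proof (rule smooth_coind[where Q = "\<lambda>k. \<exists>f. smooth_on U f \<and> (\<forall>y\<in>U. f y = k y)"])
  show "\<exists>f. smooth_on U f \<and> (\<forall>y\<in>U. f y = h y)" using assms by blast
next
  fix k :: "real^'n \<Rightarrow> real" assume "\<exists>f. smooth_on U f \<and> (\<forall>y\<in>U. f y = k y)"
  then obtain f where f: "smooth_on U f" "\<forall>y\<in>U. f y = k y" by blast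
  show "(\<forall>x\<in>U. k differentiable (at x)) \<and> (\<forall>i. \<exists>f. smooth_on U f \<and> (\<forall>y\<in>U. f y = partial i k y))"
  proof (intro conjI ballI allI)
    fix x assume "x \<in> U"
    then show "k differentiable (at x)"
      using diff_cong[OF assms(1) \<open>x\<in>U\<close>, of f k] f smooth_diff_at by blast
  next
    fix i
    show "\<exists>f. smooth_on U f \<and> (\<forall>y\<in>U. f y = partial i k y)"
      using f smooth_partial partial_cong[OF assms(1), of _ f k] by blast
  qed
qed

lemma smooth_const: fixes U :: "(real^'n::finite) set" assumes "open U" shows "smooth_on U (\<lambda>y. c)"
proof (rule smooth_coind[where Q = "\<lambda>k. \<exists>c. \<forall>y\<in>U. k y = c"])
  fix k :: "real^'n \<Rightarrow> real" assume "\<exists>c. \<forall>y\<in>U. k y = c"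
  then obtain c where c: "\<forall>y\<in>U. k y = c" by blast
  show "(\<forall>x\<in>U. k differentiable (at x)) \<and> (\<forall>i. \<exists>c. \<forall>y\<in>U. partial i k y = c)"
  proof (intro conjI ballI allI)
    fix x assume "x \<in> U"
    then show "k differentiable (at x)"
      using diff_cong[OF assms \<open>x\<in>U\<close>, of "\<lambda>_. c" k] c by simp
  next
    fix i
    have "\<forall>y\<in>U. partial i k y = 0"
      using partial_cong[OF assms, of _ k "\<lambda>_. c"] c partial_const by metis
    then show "\<exists>c. \<forall>y\<in>U. partial i k y = c" by blast
  qed
qed simp

fun sp :: "((real^'n::finite \<Rightarrow> real) \<times> (real^'n \<Rightarrow> real)) list \<Rightarrow> real^'n \<Rightarrow> real" where
  "sp [] y = 0"
| "sp (p # ps) y = fst p y * snd p y + sp ps y"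

fun dps :: "'n \<Rightarrow> ((real^'n::finite \<Rightarrow> real) \<times> (real^'n \<Rightarrow> real)) list \<Rightarrow> ((real^'n \<Rightarrow> real) \<times> (real^'n \<Rightarrow> real)) list" where
  "dps i [] = []"
| "dps i (p # ps) = (partial i (fst p), snd p) # (fst p, partial i (snd p)) # dps i ps"

lemma sp_diff:
  assumes "\<forall>p\<in>set ps. fst p differentiable (at x) \<and> snd p differentiable (at x)"
  shows "sp ps differentiable (at x)"
  using assms
proof (induct ps)
  case Nil
  have "sp [] = (\<lambda>y. 0::real)" by (rule ext) simp
  then show ?case by simp
next
  case (Cons p ps)
  have "sp (p # ps) = (\<lambda>y. fst p y * snd p y + sp ps y)" by (rule ext) simp
  then show ?case using Cons by simp
qed

lemma sp_partial:
  assumes "\<forall>p\<in>set ps. fst p differentiable (at x) \<and> snd p differentiable (at x)"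
  shows "partial i (sp ps) x = sp (dps i ps) x"
  using assms
proof (induct ps)
  case Nil
  have "sp [] = (\<lambda>y. 0::real)" by (rule ext) simp
  then show ?case by (simp add: partial_const)
next
  case (Cons p ps)
  have e: "sp (p # ps) = (\<lambda>y. fst p y * snd p y + sp ps y)" by (rule ext) simp
  have d: "(\<lambda>y. fst p y * snd p y) differentiable (at x)" using Cons by simp
  have d2: "sp ps differentiable (at x)" by (rule sp_diff) (use Cons.prems in auto)
  show ?case unfolding e
    using partial_add[OF d d2, of i] partial_mult[of "fst p" x "snd p" i] Cons by simp
qed

lemma smooth_sp:
  fixes U :: "(real^'n::finite) set"
  assumes "open U" "\<forall>p\<in>set ps. smooth_on U (fst p) \<and> smooth_on U (snd p)"
  shows "smooth_on U (sp ps)"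
proof (rule smooth_coind[where Q = "\<lambda>k. \<exists>ps. (\<forall>p\<in>set ps. smooth_on U (fst p) \<and> smooth_on U (snd p))
    \<and> (\<forall>y\<in>U. sp ps y = k y)"])
  show "\<exists>ps'. (\<forall>p\<in>set ps'. smooth_on U (fst p) \<and> smooth_on U (snd p)) \<and> (\<forall>y\<in>U. sp ps' y = sp ps y)"
    using assms by blast
next
  fix k :: "real^'n \<Rightarrow> real" assume "\<exists>ps. (\<forall>p\<in>set ps. smooth_on U (fst p) \<and> smooth_on U (snd p)) \<and> (\<forall>y\<in>U. sp ps y = k y)"
  then obtain ps where ps: "\<forall>p\<in>set ps. smooth_on U (fst p) \<and> smooth_on U (snd p)" "\<forall>y\<in>U. sp ps y = k y"
    by blast
  have dd: "\<forall>p\<in>set ps. fst p differentiable (at x) \<and> snd p differentiable (at x)" if "x \<in> U" for x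
    using ps(1) smooth_diff_at that by blast
  show "(\<forall>x\<in>U. k differentiable (at x)) \<and> (\<forall>i. \<exists>ps. (\<forall>p\<in>set ps. smooth_on U (fst p) \<and> smooth_on U (snd p))
    \<and> (\<forall>y\<in>U. sp ps y = partial i k y))"
  proof (intro conjI ballI allI)
    fix x assume x: "x \<in> U"
    show "k differentiable (at x)"
      using diff_cong[OF assms(1) x, of "sp ps" k] ps sp_diff[OF dd[OF x]] by blast
  next
    fix i
    have "\<forall>p\<in>set (dps i ps). smooth_on U (fst p) \<and> smooth_on U (snd p)"
      using ps(1) by (induct ps) (auto intro: smooth_partial)
    moreover have "\<forall>y\<in>U. sp (dps i ps) y = partial i k y"
    proof
      fix y assume y: "y \<in> U"
      have "partial i k y = partial i (sp ps) y"
        using partial_cong[OF assms(1) y, of k "sp ps"] ps(2) by metis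
      then show "sp (dps i ps) y = partial i k y" using sp_partial[OF dd[OF y]] by simp
    qed
    ultimately show "\<exists>ps. (\<forall>p\<in>set ps. smooth_on U (fst p) \<and> smooth_on U (snd p))
      \<and> (\<forall>y\<in>U. sp ps y = partial i k y)" by blast
  qed
qed

lemma smooth_mult:
  assumes "open U" "smooth_on U f" "smooth_on U h"
  shows "smooth_on U (\<lambda>y. f y * h y)"
proof -
  have "smooth_on U (sp [(f, h)])" using smooth_sp[OF assms(1), of "[(f,h)]"] assms by simp
  moreover have "sp [(f, h)] = (\<lambda>y. f y * h y)" by (rule ext) simp
  ultimately show ?thesis by simp
qed

lemma smooth_add:
  assumes "open U" "smooth_on U f" "smooth_on U h"
  shows "smooth_on U (\<lambda>y. f y + h y)"
proof -
  have "smooth_on U (sp [(f, \<lambda>_. 1), (h, \<lambda>_. 1)])"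
    using smooth_sp[OF assms(1), of "[(f,\<lambda>_. 1), (h, \<lambda>_. 1)]"] assms smooth_const[OF assms(1)] by simp
  moreover have "sp [(f, \<lambda>_. 1), (h, \<lambda>_. 1)] = (\<lambda>y. f y + h y)" by (rule ext) simp
  ultimately show ?thesis by simp
qed

lemma smooth_cmult:
  assumes "open U" "smooth_on U f"
  shows "smooth_on U (\<lambda>y. c * f y)"
  using smooth_mult[OF assms(1) smooth_const[OF assms(1)] assms(2)] .

lemma smooth_sub:
  assumes "open U" "smooth_on U f" "smooth_on U h"
  shows "smooth_on U (\<lambda>y. f y - h y)"
  using smooth_add[OF assms(1,2) smooth_cmult[OF assms(1,3), of "-1"]] by simp

lemma smooth_sum:
  assumes "open U" "finite A" "\<And>a. a \<in> A \<Longrightarrow> smooth_on U (f a)"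
  shows "smooth_on U (\<lambda>y. \<Sum>a\<in>A. f a y)"
  using assms(2,3)
proof (induct A rule: finite_induct)
  case empty then show ?case using smooth_const[OF assms(1)] by simp
next
  case (insert a A) then show ?case using smooth_add[OF assms(1)] by simp
qed

lemma smooth_prod:
  assumes "open U" "finite A" "\<And>a. a \<in> A \<Longrightarrow> smooth_on U (f a)"
  shows "smooth_on U (\<lambda>y. \<Prod>a\<in>A. f a y)"
  using assms(2,3)
proof (induct A rule: finite_induct)
  case empty then show ?case using smooth_const[OF assms(1)] by simp
next
  case (insert a A) then show ?case using smooth_mult[OF assms(1)] by simp
qed

lemma smooth_divide:
  fixes U :: "(real^'n::finite) set"
  assumes "open U" "smooth_on U f" "smooth_on U h" "\<And>y. y \<in> U \<Longrightarrow> h y \<noteq> 0"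
  shows "smooth_on U (\<lambda>y. f y / h y)"
proof (rule smooth_coind[where Q = "\<lambda>k. \<exists>p q. smooth_on U p \<and> smooth_on U q \<and> (\<forall>y\<in>U. q y \<noteq> 0)
    \<and> (\<forall>y\<in>U. k y = p y / q y)"])
  show "\<exists>p q. smooth_on U p \<and> smooth_on U q \<and> (\<forall>y\<in>U. q y \<noteq> 0) \<and> (\<forall>y\<in>U. f y / h y = p y / q y)"
    using assms by blast
next
  fix k :: "real^'n \<Rightarrow> real" assume "\<exists>p q. smooth_on U p \<and> smooth_on U q \<and> (\<forall>y\<in>U. q y \<noteq> 0) \<and> (\<forall>y\<in>U. k y = p y / q y)"
  then obtain p q where pq: "smooth_on U p" "smooth_on U q" "\<forall>y\<in>U. q y \<noteq> 0" "\<forall>y\<in>U. k y = p y / q y"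
    by blast
  show "(\<forall>x\<in>U. k differentiable (at x)) \<and> (\<forall>i. \<exists>p q. smooth_on U p \<and> smooth_on U q \<and> (\<forall>y\<in>U. q y \<noteq> 0)
    \<and> (\<forall>y\<in>U. partial i k y = p y / q y))"
  proof (intro conjI ballI allI)
    fix x assume x: "x \<in> U"
    have "(\<lambda>y. p y / q y) differentiable (at x)"
      using pq smooth_diff_at x by (intro differentiable_divide) auto
    then show "k differentiable (at x)"
      using diff_cong[OF assms(1) x, of "\<lambda>y. p y / q y" k] pq by simp
  next
    fix i
    let ?p = "\<lambda>y. partial i p y * q y - p y * partial i q y"
    let ?q = "\<lambda>y. q y * q y"
    have "smooth_on U ?p"
      using pq by (intro smooth_sub smooth_mult smooth_partial assms(1)) auto
    moreover have "smooth_on U ?q" using pq by (intro smooth_mult assms(1)) auto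
    moreover have "\<forall>y\<in>U. ?q y \<noteq> 0" using pq by simp
    moreover have "\<forall>y\<in>U. partial i k y = ?p y / ?q y"
    proof
      fix y assume y: "y \<in> U"
      have "partial i k y = partial i (\<lambda>y. p y / q y) y"
        using partial_cong[OF assms(1) y, of k "\<lambda>y. p y / q y"] pq by metis
      also have "\<dots> = ?p y / ?q y"
        using partial_divide[OF smooth_diff_at[OF pq(1) y] smooth_diff_at[OF pq(2) y]] pq(3) y by simp
      finally show "partial i k y = ?p y / ?q y" .
    qed
    ultimately show "\<exists>p q. smooth_on U p \<and> smooth_on U q \<and> (\<forall>y\<in>U. q y \<noteq> 0)
      \<and> (\<forall>y\<in>U. partial i k y = p y / q y)" by blast
  qed
qed



lemma line_deriv:
  fixes f :: "real^'n::finite \<Rightarrow> real"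
  assumes "f differentiable (at (a + s *\<^sub>R v))"
  shows "((\<lambda>s. f (a + s *\<^sub>R v)) has_derivative (\<lambda>h. h * frechet_derivative f (at (a + s *\<^sub>R v)) v)) (at s)"
proof -
  have inner: "((\<lambda>s. a + s *\<^sub>R v) has_derivative (\<lambda>h. h *\<^sub>R v)) (at s)"
    by (auto intro!: derivative_eq_intros)
  have "((f \<circ> (\<lambda>s. a + s *\<^sub>R v)) has_derivative (frechet_derivative f (at (a + s *\<^sub>R v)) \<circ> (\<lambda>h. h *\<^sub>R v))) (at s)"
    by (rule diff_chain_at[OF inner]) (use assms frechet_derivative_works in blast)
  moreover have "(frechet_derivative f (at (a + s *\<^sub>R v)) \<circ> (\<lambda>h. h *\<^sub>R v)) = (\<lambda>h. h * frechet_derivative f (at (a + s *\<^sub>R v)) v)"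
    using linear_scale[OF linear_frechet_derivative[OF assms]] by (auto simp: o_def)
  ultimately show ?thesis by (simp add: o_def)
qed

lemma in_ball_add: "norm (v::'a::real_normed_vector) < r \<Longrightarrow> x + v \<in> ball x r"
  by (simp add: dist_norm)

lemma schwarz_approx:
  fixes f :: "real^'n::finite \<Rightarrow> real"
  assumes U: "open U" "x \<in> U" and fd: "\<And>y. y \<in> U \<Longrightarrow> f differentiable (at y)"
    and Fd: "partial i f differentiable (at x)"
    and e: "e > 0"
  shows "\<exists>\<delta>>0. \<forall>t. 0 < \<bar>t\<bar> \<and> \<bar>t\<bar> < \<delta> \<longrightarrow>
    \<bar>(f (x + t *\<^sub>R axis i 1 + t *\<^sub>R axis j 1) - f (x + t *\<^sub>R axis i 1) - f (x + t *\<^sub>R axis j 1) + f x)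
      - t * t * partial j (partial i f) x\<bar> \<le> 3 * e * (t * t)"
proof -
  define F where "F = partial i f"
  define F' where "F' = frechet_derivative F (at x)"
  define ei :: "real^'n" where "ei = axis i 1"
  define ej :: "real^'n" where "ej = axis j 1"
  have hF: "(F has_derivative F') (at x)" unfolding F'_def F_def using Fd frechet_derivative_works by blast
  have linF: "linear F'" using hF has_derivative_linear by blast
  have pj: "partial j F x = F' ej" unfolding partial_def F'_def ej_def by simp
  obtain d where d: "d > 0" "\<And>y. norm (y - x) < d \<Longrightarrow> norm (F y - F x - F' (y - x)) \<le> e * norm (y - x)"
    using hF e unfolding has_derivative_at_alt by blast
  obtain r where r: "r > 0" "ball x r \<subseteq> U" using U open_contains_ball by blast
  define \<delta> where "\<delta> = min (r/2) (d/2)"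
  have dpos: "\<delta> > 0" using d r by (simp add: \<delta>_def)
  have key: "\<bar>(f (x + t *\<^sub>R ei + t *\<^sub>R ej) - f (x + t *\<^sub>R ei) - f (x + t *\<^sub>R ej) + f x)
      - t * t * partial j F x\<bar> \<le> 3 * e * (t * t)" if t: "0 < \<bar>t\<bar>" "\<bar>t\<bar> < \<delta>" for t
  proof -
    define \<phi> where "\<phi> = (\<lambda>s. f (x + t *\<^sub>R ej + s *\<^sub>R ei) - f (x + s *\<^sub>R ei))"
    define \<phi>' where "\<phi>' = (\<lambda>s h. h * (F (x + t *\<^sub>R ej + s *\<^sub>R ei) - F (x + s *\<^sub>R ei)))"
    have inU: "x + t *\<^sub>R ej + s *\<^sub>R ei \<in> U \<and> x + s *\<^sub>R ei \<in> U" if "\<bar>s\<bar> \<le> \<bar>t\<bar>" for s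
    proof -
      have "norm (t *\<^sub>R ej + s *\<^sub>R ei) \<le> \<bar>t\<bar> + \<bar>s\<bar>"
        using norm_triangle_ineq[of "t *\<^sub>R ej" "s *\<^sub>R ei"] by (simp add: ei_def ej_def)
      moreover have "norm (s *\<^sub>R ei) \<le> \<bar>t\<bar>" using that by (simp add: ei_def)
      moreover have "\<bar>t\<bar> + \<bar>s\<bar> < r" "\<bar>t\<bar> < r" using t that unfolding \<delta>_def by auto
      ultimately have "x + (t *\<^sub>R ej + s *\<^sub>R ei) \<in> ball x r" "x + s *\<^sub>R ei \<in> ball x r"
        by (intro in_ball_add; linarith)+
      then have "x + t *\<^sub>R ej + s *\<^sub>R ei \<in> ball x r" "x + s *\<^sub>R ei \<in> ball x r"
        by (simp_all add: add.assoc)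
      then show ?thesis using r by auto
    qed
    have der: "(\<phi> has_derivative \<phi>' s) (at s within S)" if "\<bar>s\<bar> \<le> \<bar>t\<bar>" for s S
    proof -
      have d1: "f differentiable (at (x + t *\<^sub>R ej + s *\<^sub>R ei))" using fd inU[OF that] by blast
      have d2: "f differentiable (at (x + s *\<^sub>R ei))" using fd inU[OF that] by blast
      have "(\<phi> has_derivative (\<lambda>h. h * frechet_derivative f (at (x + t *\<^sub>R ej + s *\<^sub>R ei)) ei
          - h * frechet_derivative f (at (x + s *\<^sub>R ei)) ei)) (at s)"
        unfolding \<phi>_def by (rule has_derivative_diff[OF line_deriv[OF d1] line_deriv[OF d2]])
      moreover have "(\<lambda>h. h * frechet_derivative f (at (x + t *\<^sub>R ej + s *\<^sub>R ei)) ei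
          - h * frechet_derivative f (at (x + s *\<^sub>R ei)) ei) = \<phi>' s"
        unfolding \<phi>'_def F_def partial_def ei_def by (auto simp: algebra_simps)
      ultimately show ?thesis using has_derivative_at_withinI by metis
    qed
    obtain \<xi> where \<xi>: "\<bar>\<xi>\<bar> \<le> \<bar>t\<bar>" "\<phi> t - \<phi> 0 = t * (F (x + t *\<^sub>R ej + \<xi> *\<^sub>R ei) - F (x + \<xi> *\<^sub>R ei))"
    proof (cases "t \<ge> 0")
      case True
      obtain \<xi> where "\<xi> \<in> {0..t}" "\<phi> t - \<phi> 0 = \<phi>' \<xi> (t - 0)"
        using mvt_very_simple[OF True, of \<phi> \<phi>'] der by auto
      then show ?thesis using True by (intro that[of \<xi>]) (auto simp: \<phi>'_def)
    next
      case False
      obtain \<xi> where "\<xi> \<in> {t..0}" "\<phi> 0 - \<phi> t = \<phi>' \<xi> (0 - t)"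
        using mvt_very_simple[of t 0 \<phi> \<phi>'] False der by auto
      then show ?thesis using False by (intro that[of \<xi>]) (auto simp: \<phi>'_def algebra_simps)
    qed
    define v1 where "v1 = t *\<^sub>R ej + \<xi> *\<^sub>R ei"
    define v2 where "v2 = \<xi> *\<^sub>R ei"
    have nv1: "norm v1 \<le> 2 * \<bar>t\<bar>"
      using norm_triangle_ineq[of "t *\<^sub>R ej" "\<xi> *\<^sub>R ei"] \<xi>(1) by (simp add: v1_def ei_def ej_def)
    have nv2: "norm v2 \<le> \<bar>t\<bar>" using \<xi>(1) by (simp add: v2_def ei_def)
    have e1: "norm (F (x + v1) - F x - F' v1) \<le> e * norm v1"
      using d(2)[of "x + v1"] nv1 t unfolding \<delta>_def by auto
    have e2: "norm (F (x + v2) - F x - F' v2) \<le> e * norm v2"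
      using d(2)[of "x + v2"] nv2 t unfolding \<delta>_def by auto
    have lin: "F' v1 - F' v2 = t * F' ej"
      using linear_diff[OF linF, of v1 v2] linear_scale[OF linF, of t ej] by (simp add: v1_def v2_def)
    have "\<bar>F (x + v1) - F (x + v2) - t * F' ej\<bar> \<le> e * norm v1 + e * norm v2"
      using e1 e2 lin by (simp add: real_norm_def)
    also have "\<dots> \<le> e * (2 * \<bar>t\<bar>) + e * \<bar>t\<bar>"
      using mult_left_mono[OF nv1, of e] mult_left_mono[OF nv2, of e] e by linarith
    also have "\<dots> = 3 * e * \<bar>t\<bar>" by (simp add: algebra_simps)
    finally have main: "\<bar>F (x + v1) - F (x + v2) - t * F' ej\<bar> \<le> 3 * e * \<bar>t\<bar>" .
    have eq: "f (x + t *\<^sub>R ei + t *\<^sub>R ej) - f (x + t *\<^sub>R ei) - f (x + t *\<^sub>R ej) + f x = \<phi> t - \<phi> 0"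
      unfolding \<phi>_def by (simp add: algebra_simps)
    have "\<bar>(\<phi> t - \<phi> 0) - t * t * F' ej\<bar> = \<bar>t\<bar> * \<bar>F (x + v1) - F (x + v2) - t * F' ej\<bar>"
      unfolding \<xi>(2) v1_def v2_def by (simp add: algebra_simps flip: abs_mult)
    also have "\<dots> \<le> \<bar>t\<bar> * (3 * e * \<bar>t\<bar>)" using main by (simp add: mult_left_mono)
    also have "\<dots> = 3 * e * (t * t)" by (simp add: abs_mult_self_eq)
    finally have "\<bar>(\<phi> t - \<phi> 0) - t * t * F' ej\<bar> \<le> 3 * e * (t * t)" .
    then show ?thesis unfolding eq pj .
  qed
  note key' = key[unfolded F_def ei_def ej_def]
  show ?thesis
    using dpos key' by blast
qed

lemma abs_tri2: "\<bar>(X::real) - a\<bar> \<le> c \<Longrightarrow> \<bar>X - b\<bar> \<le> c \<Longrightarrow> \<bar>a - b\<bar> \<le> 2 * c"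
  by (simp add: abs_le_iff)

lemma cancel_tt:
  fixes a b c e :: real
  assumes "\<bar>c * a - c * b\<bar> \<le> 2 * (3 * e * c)" "c > 0"
  shows "\<bar>a - b\<bar> \<le> 6 * e"
proof -
  have "\<bar>c * a - c * b\<bar> = c * \<bar>a - b\<bar>" using assms(2) by (simp add: abs_mult flip: right_diff_distrib)
  then have "c * \<bar>a - b\<bar> \<le> c * (6 * e)" using assms(1) by (simp add: mult_ac)
  then show ?thesis using assms(2) by simp
qed

lemma schwarz:
  fixes f :: "real^'n::finite \<Rightarrow> real"
  assumes "open U" "smooth_on U f" "x \<in> U"
  shows "partial i (partial j f) x = partial j (partial i f) x"
proof -
  have fd: "\<And>y. y \<in> U \<Longrightarrow> f differentiable (at y)" using assms smooth_diff_at by blast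
  have Fi: "partial i f differentiable (at x)" and Fj: "partial j f differentiable (at x)"
    using assms smooth_diff_at smooth_partial by blast+
  let ?A = "partial j (partial i f) x" and ?B = "partial i (partial j f) x"
  have "\<bar>?A - ?B\<bar> \<le> 6 * e" if e: "e > 0" for e
  proof -
    obtain d1 where d1: "d1 > 0" "\<forall>t. 0 < \<bar>t\<bar> \<and> \<bar>t\<bar> < d1 \<longrightarrow>
      \<bar>(f (x + t *\<^sub>R axis i 1 + t *\<^sub>R axis j 1) - f (x + t *\<^sub>R axis i 1) - f (x + t *\<^sub>R axis j 1) + f x)
      - t * t * ?A\<bar> \<le> 3 * e * (t * t)"
      using schwarz_approx[OF assms(1,3) fd Fi e, of j] by blast
    obtain d2 where d2: "d2 > 0" "\<forall>t. 0 < \<bar>t\<bar> \<and> \<bar>t\<bar> < d2 \<longrightarrow>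
      \<bar>(f (x + t *\<^sub>R axis j 1 + t *\<^sub>R axis i 1) - f (x + t *\<^sub>R axis j 1) - f (x + t *\<^sub>R axis i 1) + f x)
      - t * t * ?B\<bar> \<le> 3 * e * (t * t)"
      using schwarz_approx[OF assms(1,3) fd Fj e, of i] by blast
    define t where "t = min d1 d2 / 2"
    have t: "0 < \<bar>t\<bar>" "\<bar>t\<bar> < d1" "\<bar>t\<bar> < d2" using d1 d2 by (auto simp: t_def)
    have sw: "x + t *\<^sub>R axis j 1 + t *\<^sub>R axis i 1 = x + t *\<^sub>R axis i 1 + t *\<^sub>R axis j 1" by (simp add: algebra_simps)
    have sw2: "f (x + t *\<^sub>R axis i 1 + t *\<^sub>R axis j 1) - f (x + t *\<^sub>R axis j 1) - f (x + t *\<^sub>R axis i 1)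
       = f (x + t *\<^sub>R axis i 1 + t *\<^sub>R axis j 1) - f (x + t *\<^sub>R axis i 1) - f (x + t *\<^sub>R axis j 1)" by linarith
    have "\<bar>t * t * ?A - t * t * ?B\<bar> \<le> 2 * (3 * e * (t * t))"
      using abs_tri2[OF d1(2)[rule_format, OF conjI[OF t(1,2)]] d2(2)[rule_format, OF conjI[OF t(1,3)], unfolded sw sw2]] .
    moreover have "t * t > 0" using t by (auto simp: zero_less_mult_iff)
    ultimately show ?thesis by (rule cancel_tt)
  qed
  note h = this
  have "\<bar>?A - ?B\<bar> \<le> 0"
  proof (rule ccontr)
    assume h2: "\<not> \<bar>?A - ?B\<bar> \<le> 0"
    then have "\<bar>?A - ?B\<bar> \<le> 6 * (\<bar>?A - ?B\<bar> / 12)" by (intro h) simp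
    then show False using h2 by simp
  qed
  then show ?thesis by simp
qed



lemma pd_invertible:
  fixes G :: "real^'n::finite^'n"
  assumes pd: "\<forall>v. v \<noteq> 0 \<longrightarrow> v \<bullet> (G *v v) > 0"
  shows "invertible G"
proof -
  have "\<forall>v. G *v v = 0 \<longrightarrow> v = 0"
  proof (intro allI impI)
    fix v assume "G *v v = 0"
    then show "v = 0" using pd by (metis inner_zero_right less_irrefl)
  qed
  then show ?thesis using matrix_left_invertible_ker invertible_left_inverse by blast
qed

lemma matrix_inv_props:
  fixes G :: "real^'n::finite^'n"
  assumes "invertible G"
  shows "G ** matrix_inv G = mat 1" "matrix_inv G ** G = mat 1"
  using assms unfolding invertible_def matrix_inv_def by (metis (mono_tags, lifting) someI_ex)+

lemma inv_sum1:
  fixes G :: "real^'n::finite^'n"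
  assumes "invertible G"
  shows "(\<Sum>k\<in>UNIV. G $ i $ k * matrix_inv G $ k $ j) = (if i = j then 1 else 0)"
    "(\<Sum>k\<in>UNIV. matrix_inv G $ i $ k * G $ k $ j) = (if i = j then 1 else 0)"
proof -
  have "(G ** matrix_inv G) $ i $ j = mat 1 $ i $ j" "(matrix_inv G ** G) $ i $ j = mat 1 $ i $ j"
    using matrix_inv_props[OF assms] by simp_all
  then show "(\<Sum>k\<in>UNIV. G $ i $ k * matrix_inv G $ k $ j) = (if i = j then 1 else 0)"
    "(\<Sum>k\<in>UNIV. matrix_inv G $ i $ k * G $ k $ j) = (if i = j then 1 else 0)"
    by (simp_all add: matrix_matrix_mult_def mat_def)
qed

lemma inv_cramer:
  fixes G :: "real^'n::finite^'n"
  assumes "invertible G"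
  shows "matrix_inv G $ i $ j = det (\<chi> r s. if s = i then (if r = j then 1 else 0) else G $ r $ s) / det G"
proof -
  have d: "det G \<noteq> 0" using assms invertible_det_nz by blast
  define xv :: "real^'n" where "xv = (\<chi> k. matrix_inv G $ k $ j)"
  define b :: "real^'n" where "b = (\<chi> r. if r = j then 1 else 0)"
  have "G *v xv = b"
    using inv_sum1(1)[OF assms] unfolding xv_def b_def
    by (simp add: matrix_vector_mult_def vec_eq_iff)
  then have "xv = (\<chi> k. det(\<chi> i j. if j=k then b$i else G$i$j) / det G)"
    using cramer[OF d] by blast
  then have "xv $ i = det(\<chi> r s. if s=i then b$r else G$r$s) / det G" by simp
  moreover have "(\<chi> r s. if s=i then b$r else G$r$s) = (\<chi> r s. if s = i then (if r = j then 1 else 0) else G $ r $ s)"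
    unfolding b_def by (simp add: vec_eq_iff)
  ultimately show ?thesis unfolding xv_def by simp
qed

lemma smooth_det:
  fixes M :: "real^'m::finite \<Rightarrow> real^'n::finite^'n"
  assumes "open U" "\<And>r s. smooth_on U (\<lambda>y. M y $ r $ s)"
  shows "smooth_on U (\<lambda>y. det (M y))"
  unfolding det_def
  by (intro smooth_sum smooth_mult smooth_prod smooth_const assms finite_permutations) auto



lemma sum_if_split_eq:
  assumes "finite I" "p \<in> I"
  shows "(\<Sum>q\<in>I. f q) = f p + (\<Sum>q\<in>I. if q = p then 0 else f q)"
proof -
  have "(\<Sum>q\<in>I. f q) = (\<Sum>q\<in>I. (if q = p then f p else 0) + (if q = p then 0 else f q))"
    by (rule sum.cong) auto
  also have "\<dots> = f p + (\<Sum>q\<in>I. if q = p then 0 else f q)"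
    using assms by (simp add: sum.distrib)
  finally show ?thesis .
qed

lemma sum_if0: "(\<Sum>k\<in>A. if c then 0 else f k) = (if c then 0 else (\<Sum>k\<in>A. f k))"
  by simp

lemma swapA: "(\<Sum>k\<in>UNIV. \<Sum>j\<in>UNIV. (f k::real) * (g k j * h j)) = (\<Sum>j\<in>UNIV. (\<Sum>k\<in>UNIV. g k j * f k) * h j)"
  by (subst sum.swap) (simp add: sum_distrib_right sum_distrib_left mult_ac)

lemma swapB: "(\<Sum>k\<in>UNIV. \<Sum>j\<in>UNIV. (f k::real) * (g k j * h j)) = (\<Sum>j\<in>UNIV. (\<Sum>k\<in>UNIV. f k * g k j) * h j)"
  by (subst sum.swap) (simp add: sum_distrib_right sum_distrib_left mult_ac)

lemma ricci_alg:
  fixes PP :: "'n::finite \<Rightarrow> 'n \<Rightarrow> 'n list \<Rightarrow> real" and PA :: "'n \<Rightarrow> 'n list \<Rightarrow> real"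
    and TZ :: "'n list \<Rightarrow> real" and Gm :: "'n \<Rightarrow> 'n \<Rightarrow> 'n \<Rightarrow> real"
    and dG :: "'n \<Rightarrow> 'n \<Rightarrow> 'n \<Rightarrow> 'n \<Rightarrow> real"
  assumes PPsym: "PP a b l = PP b a l"
    and Gsym: "\<And>a b k. Gm a b k = Gm b a k"
    and A_def: "\<And>b l. A b l = PA b l - (\<Sum>p<length l. \<Sum>k\<in>UNIV. Gm b (l!p) k * TZ (l[p := k]))"
    and N_def: "\<And>a b l. N a b l = PP a b l
        - (\<Sum>p<length l. \<Sum>k\<in>UNIV. dG a b (l!p) k * TZ (l[p := k]) + Gm b (l!p) k * PA a (l[p := k]))
        - ((\<Sum>k\<in>UNIV. Gm a b k * A k l) + (\<Sum>p<length l. \<Sum>k\<in>UNIV. Gm a (l!p) k * A b (l[p := k])))"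
  shows "N a b l - N b a l = - (\<Sum>p<length l. \<Sum>j\<in>UNIV.
      (dG a b (l!p) j - dG b a (l!p) j - (\<Sum>k\<in>UNIV. Gm a (l!p) k * Gm b k j) + (\<Sum>k\<in>UNIV. Gm a k j * Gm b (l!p) k))
       * TZ (l[p := j]))"
proof -
  define n where "n = length l"
  define I where "I = {..<n}"
  have fI: "finite I" unfolding I_def by simp
  define X1 where "X1 a b = (\<Sum>p\<in>I. \<Sum>k\<in>UNIV. dG a b (l!p) k * TZ (l[p := k]))" for a b
  define X2 where "X2 a b = (\<Sum>p\<in>I. \<Sum>k\<in>UNIV. Gm b (l!p) k * PA a (l[p := k]))" for a b
  define X3 where "X3 a b = (\<Sum>k\<in>UNIV. Gm a b k * A k l)" for a b
  define D where "D a b = (\<Sum>p\<in>I. \<Sum>k\<in>UNIV. \<Sum>j\<in>UNIV. Gm a (l!p) k * (Gm b k j * TZ (l[p := j])))" for a b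
  define Off where "Off a b = (\<Sum>p\<in>I. \<Sum>q\<in>I. if q = p then 0 else
      (\<Sum>k\<in>UNIV. \<Sum>j\<in>UNIV. Gm a (l!p) k * (Gm b (l!q) j * TZ (l[p := k, q := j]))))" for a b
  define W where "W a b = (\<Sum>p\<in>I. \<Sum>k\<in>UNIV. Gm a (l!p) k *
      (\<Sum>q\<in>I. \<Sum>j\<in>UNIV. Gm b (l[p := k] ! q) j * TZ (l[p := k, q := j])))" for a b
  have N: "N a b l = PP a b l - X1 a b - X2 a b - X3 a b - (X2 b a - W a b)" for a b
  proof -
    have "(\<Sum>p\<in>I. \<Sum>k\<in>UNIV. Gm a (l!p) k * A b (l[p := k])) = X2 b a - W a b"
      unfolding X2_def W_def A_def
      by (simp add: I_def n_def right_diff_distrib sum_subtractf sum_distrib_left)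
    then show ?thesis unfolding N_def X1_def X2_def X3_def
      by (simp add: I_def n_def sum.distrib)
  qed
  have X3: "X3 a b = X3 b a" unfolding X3_def using Gsym by simp
  have W: "W a b = D a b + Off a b" for a b
  proof -
    have inner: "(\<Sum>q\<in>I. \<Sum>j\<in>UNIV. Gm b (l[p := k] ! q) j * TZ (l[p := k, q := j]))
       = (\<Sum>j\<in>UNIV. Gm b k j * TZ (l[p := j])) + (\<Sum>q\<in>I. if q = p then 0 else
          (\<Sum>j\<in>UNIV. Gm b (l!q) j * TZ (l[p := k, q := j])))" if p: "p \<in> I" for p k
    proof -
      have pl: "p < length l" using p by (simp add: I_def n_def)
      have "(\<Sum>q\<in>I. \<Sum>j\<in>UNIV. Gm b (l[p := k] ! q) j * TZ (l[p := k, q := j]))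
        = (\<Sum>j\<in>UNIV. Gm b (l[p := k] ! p) j * TZ (l[p := k, p := j])) + (\<Sum>q\<in>I. if q = p then 0 else
          (\<Sum>j\<in>UNIV. Gm b (l[p := k] ! q) j * TZ (l[p := k, q := j])))"
        by (rule sum_if_split_eq[OF fI p])
      also have "\<dots> = (\<Sum>j\<in>UNIV. Gm b k j * TZ (l[p := j])) + (\<Sum>q\<in>I. if q = p then 0 else
          (\<Sum>j\<in>UNIV. Gm b (l!q) j * TZ (l[p := k, q := j])))"
        using pl by (intro arg_cong2[where f="(+)"] sum.cong) auto
      finally show ?thesis .
    qed
    have "W a b = (\<Sum>p\<in>I. \<Sum>k\<in>UNIV. Gm a (l!p) k * ((\<Sum>j\<in>UNIV. Gm b k j * TZ (l[p := j])) + (\<Sum>q\<in>I. if q = p then 0 else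
          (\<Sum>j\<in>UNIV. Gm b (l!q) j * TZ (l[p := k, q := j])))))"
      unfolding W_def by (intro sum.cong refl) (simp add: inner)
    also have "\<dots> = D a b + (\<Sum>p\<in>I. \<Sum>k\<in>UNIV. \<Sum>q\<in>I. if q = p then 0 else
          (\<Sum>j\<in>UNIV. Gm a (l!p) k * (Gm b (l!q) j * TZ (l[p := k, q := j]))))"
      unfolding D_def by (simp add: distrib_left sum.distrib sum_distrib_left if_distrib cong: if_cong)
    also have "(\<Sum>p\<in>I. \<Sum>k\<in>UNIV. \<Sum>q\<in>I. if q = p then 0 else
          (\<Sum>j\<in>UNIV. Gm a (l!p) k * (Gm b (l!q) j * TZ (l[p := k, q := j])))) = Off a b"
      unfolding Off_def
      by (intro sum.cong refl, subst sum.swap) (simp only: sum_if0)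
    finally show ?thesis .
  qed
  have Off: "Off a b = Off b a"
  proof -
    have "Off a b = (\<Sum>q\<in>I. \<Sum>p\<in>I. if q = p then 0 else
      (\<Sum>k\<in>UNIV. \<Sum>j\<in>UNIV. Gm a (l!p) k * (Gm b (l!q) j * TZ (l[p := k, q := j]))))"
      unfolding Off_def by (rule sum.swap)
    also have "\<dots> = Off b a"
      unfolding Off_def
    proof (intro sum.cong refl)
      fix q p assume "q \<in> I" "p \<in> I"
      show "(if q = p then 0 else
        (\<Sum>k\<in>UNIV. \<Sum>j\<in>UNIV. Gm a (l!p) k * (Gm b (l!q) j * TZ (l[p := k, q := j]))))
        = (if p = q then 0 else
        (\<Sum>k\<in>UNIV. \<Sum>j\<in>UNIV. Gm b (l!q) k * (Gm a (l!p) j * TZ (l[q := k, p := j]))))"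
      proof (cases "q = p")
        case False
        then have "\<And>k j. l[p := k, q := j] = l[q := j, p := k]" by (simp add: list_update_swap)
        then show ?thesis using False
          by (simp, subst sum.swap) (simp add: mult_ac)
      qed simp
    qed
    finally show ?thesis .
  qed
  have D: "D b a = (\<Sum>p\<in>I. \<Sum>j\<in>UNIV. (\<Sum>k\<in>UNIV. Gm a k j * Gm b (l!p) k) * TZ (l[p := j]))"
    unfolding D_def swapA by (rule refl)
  have D2: "D a b = (\<Sum>p\<in>I. \<Sum>j\<in>UNIV. (\<Sum>k\<in>UNIV. Gm a (l!p) k * Gm b k j) * TZ (l[p := j]))"
    unfolding D_def swapB by (rule refl)
  have rhs: "(\<Sum>p<length l. \<Sum>j\<in>UNIV.
      (dG a b (l!p) j - dG b a (l!p) j - (\<Sum>k\<in>UNIV. Gm a (l!p) k * Gm b k j) + (\<Sum>k\<in>UNIV. Gm a k j * Gm b (l!p) k))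
       * TZ (l[p := j])) = X1 a b - X1 b a - D a b + D b a"
    unfolding X1_def D D2 I_def n_def
    by (simp add: algebra_simps sum.distrib sum_subtractf)
  show ?thesis using N[of a b] N[of b a] X3 W[of a b] W[of b a] Off rhs PPsym by simp
qed



lemma cov_deriv_Cons: "cov_deriv g T x (b # l) = partial b (\<lambda>y. T y l) x
   - (\<Sum>p<length l. \<Sum>k\<in>UNIV. christoffel g x b (l ! p) k * T x (l[p := k]))"
  unfolding cov_deriv_def by simp

lemma NN_expand:
  fixes g :: "real^'n::finite \<Rightarrow> real^'n^'n" and T :: "real^'n \<Rightarrow> 'n list \<Rightarrow> real"
  assumes Gd: "\<And>b c k. (\<lambda>y. christoffel g y b c k) differentiable (at x)"
    and Td: "\<And>l. (\<lambda>y. T y l) differentiable (at x)"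
    and Pd: "\<And>b l. (\<lambda>y. partial b (\<lambda>y. T y l) y) differentiable (at x)"
  shows "cov_deriv g (cov_deriv g T) x (a # b # l) =
     partial a (\<lambda>y. partial b (\<lambda>y. T y l) y) x
        - (\<Sum>p<length l. \<Sum>k\<in>UNIV. partial a (\<lambda>y. christoffel g y b (l!p) k) x * T x (l[p := k])
              + christoffel g x b (l!p) k * partial a (\<lambda>y. T y (l[p := k])) x)
        - ((\<Sum>k\<in>UNIV. christoffel g x a b k * cov_deriv g T x (k # l))
           + (\<Sum>p<length l. \<Sum>k\<in>UNIV. christoffel g x a (l!p) k * cov_deriv g T x (b # l[p := k])))"
proof -
  have e: "(\<lambda>y. cov_deriv g T y (b # l)) = (\<lambda>y. partial b (\<lambda>y. T y l) y
      - (\<Sum>p<length l. \<Sum>k\<in>UNIV. christoffel g y b (l ! p) k * T y (l[p := k])))"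
    by (rule ext) (simp add: cov_deriv_Cons)
  have d1: "(\<lambda>y. christoffel g y b (l ! p) k * T y (l[p := k])) differentiable (at x)" for p k
    using Gd Td by simp
  have d2: "(\<lambda>y. \<Sum>k\<in>UNIV. christoffel g y b (l ! p) k * T y (l[p := k])) differentiable (at x)" for p
    using d1 by simp
  have d3: "(\<lambda>y. \<Sum>p<length l. \<Sum>k\<in>UNIV. christoffel g y b (l ! p) k * T y (l[p := k])) differentiable (at x)"
    using d2 by simp
  have "partial a (\<lambda>y. cov_deriv g T y (b # l)) x = partial a (\<lambda>y. partial b (\<lambda>y. T y l) y) x
      - partial a (\<lambda>y. \<Sum>p<length l. \<Sum>k\<in>UNIV. christoffel g y b (l ! p) k * T y (l[p := k])) x"
    unfolding e by (rule partial_diff[OF Pd d3])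
  also have "partial a (\<lambda>y. \<Sum>p<length l. \<Sum>k\<in>UNIV. christoffel g y b (l ! p) k * T y (l[p := k])) x
     = (\<Sum>p<length l. \<Sum>k\<in>UNIV. partial a (\<lambda>y. christoffel g y b (l!p) k) x * T x (l[p := k])
              + christoffel g x b (l!p) k * partial a (\<lambda>y. T y (l[p := k])) x)"
    apply (subst partial_sum[OF d2])
    apply (intro sum.cong refl)
    apply (subst partial_sum[OF d1])
    apply (intro sum.cong refl)
    apply (subst partial_mult[OF Gd Td])
    apply simp
    done
  finally have 1: "partial a (\<lambda>y. cov_deriv g T y (b # l)) x = partial a (\<lambda>y. partial b (\<lambda>y. T y l) y) x
     - (\<Sum>p<length l. \<Sum>k\<in>UNIV. partial a (\<lambda>y. christoffel g y b (l!p) k) x * T x (l[p := k])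
              + christoffel g x b (l!p) k * partial a (\<lambda>y. T y (l[p := k])) x)" .
  have 2: "(\<Sum>p<length (b # l). \<Sum>k\<in>UNIV. christoffel g x a ((b # l) ! p) k * cov_deriv g T x ((b # l)[p := k]))
     = (\<Sum>k\<in>UNIV. christoffel g x a b k * cov_deriv g T x (k # l))
           + (\<Sum>p<length l. \<Sum>k\<in>UNIV. christoffel g x a (l!p) k * cov_deriv g T x (b # l[p := k]))"
    by (simp del: sum.lessThan_Suc add: sum.lessThan_Suc_shift)
  show ?thesis
    by (subst cov_deriv_def) (simp only: list.case 1 2 flip: cov_deriv_def)
qed

lemma ricci_identity:
  fixes g :: "real^'n::finite \<Rightarrow> real^'n^'n" and T :: "real^'n \<Rightarrow> 'n list \<Rightarrow> real"
  assumes Gd: "\<And>b c k. (\<lambda>y. christoffel g y b c k) differentiable (at x)"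
    and Td: "\<And>l. (\<lambda>y. T y l) differentiable (at x)"
    and Pd: "\<And>b l. (\<lambda>y. partial b (\<lambda>y. T y l) y) differentiable (at x)"
    and P2sym: "\<And>a b l. partial a (\<lambda>y. partial b (\<lambda>y. T y l) y) x = partial b (\<lambda>y. partial a (\<lambda>y. T y l) y) x"
    and Gsym: "\<And>a b k. christoffel g x a b k = christoffel g x b a k"
  shows "cov_deriv g (cov_deriv g T) x (a # b # l) - cov_deriv g (cov_deriv g T) x (b # a # l)
    = - (\<Sum>p<length l. \<Sum>j\<in>UNIV. Rup g x a b (l!p) j * T x (l[p := j]))"
proof -
  have "cov_deriv g (cov_deriv g T) x (a # b # l) - cov_deriv g (cov_deriv g T) x (b # a # l)
    = - (\<Sum>p<length l. \<Sum>j\<in>UNIV.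
      (partial a (\<lambda>y. christoffel g y b (l!p) j) x - partial b (\<lambda>y. christoffel g y a (l!p) j) x
        - (\<Sum>k\<in>UNIV. christoffel g x a (l!p) k * christoffel g x b k j)
        + (\<Sum>k\<in>UNIV. christoffel g x a k j * christoffel g x b (l!p) k))
       * T x (l[p := j]))"
    by (rule ricci_alg[where PP = "\<lambda>a b l. partial a (\<lambda>y. partial b (\<lambda>y. T y l) y) x"
        and PA = "\<lambda>b l. partial b (\<lambda>y. T y l) x" and TZ = "T x" and Gm = "christoffel g x"
        and dG = "\<lambda>a b c k. partial a (\<lambda>y. christoffel g y b c k) x"
        and A = "\<lambda>b l. cov_deriv g T x (b # l)"
        and N = "\<lambda>a b l. cov_deriv g (cov_deriv g T) x (a # b # l)"])
      (rule P2sym, rule Gsym, rule cov_deriv_Cons, rule NN_expand[OF Gd Td Pd])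
  then show ?thesis unfolding Rup_def .
qed



locale curv_alg =
  fixes R :: "'n::finite \<Rightarrow> 'n \<Rightarrow> 'n \<Rightarrow> 'n \<Rightarrow> real"
    and L :: "'n \<Rightarrow> 'n \<Rightarrow> 'n \<Rightarrow> 'n \<Rightarrow> real"
    and G Gi :: "'n \<Rightarrow> 'n \<Rightarrow> real"
  assumes anti: "R a b c d = - R b a c d"
    and bian: "R a b c d + R b c a d + R c a b d = 0"
    and Gsym: "G i j = G j i"
    and GGi: "(\<Sum>k\<in>UNIV. G i k * Gi k j) = (if i = j then 1 else 0)"
    and GiG: "(\<Sum>k\<in>UNIV. Gi i k * G k j) = (if i = j then 1 else 0)"
    and L_def: "L a b c d = (\<Sum>e\<in>UNIV. R a b c e * G e d)"
    and Lanti2: "L a b c d = - L a b d c"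
    and semi: "(\<Sum>m\<in>UNIV. R a b c m * L m d e f + R a b d m * L c m e f
                 + R a b e m * L c d m f + R a b f m * L c d e m) = 0"
begin

lemma Lanti1: "L a b c d = - L b a c d"
  unfolding L_def by (subst anti) (simp add: sum_negf)

lemma Lbian: "L a b c d + L b c a d + L c a b d = 0"
proof -
  have "L a b c d + L b c a d + L c a b d = (\<Sum>e\<in>UNIV. (R a b c e + R b c a e + R c a b e) * G e d)"
    unfolding L_def by (simp add: sum.distrib algebra_simps)
  also have "\<dots> = 0" by (simp add: bian)
  finally show ?thesis .
qed

lemma Lpair: "L a b c d = L c d a b"
proof -
  have 1: "L a b c d + L b c a d + L c a b d = 0" by (rule Lbian)
  have 2: "L b c d a + L c d b a + L d b c a = 0" by (rule Lbian)
  have 3: "L c d a b + L d a c b + L a c d b = 0" by (rule Lbian)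
  have 4: "L d a b c + L a b d c + L b d a c = 0" by (rule Lbian)
  note A = Lanti1 Lanti2
  show ?thesis using 1 2 3 4
      A[of a b c d] A[of b c a d] A[of c a b d] A[of b c d a] A[of c d b a] A[of d b c a]
      A[of c d a b] A[of d a c b] A[of a c d b] A[of d a b c] A[of a b d c] A[of b d a c]
      Lanti1[of b c d a] Lanti2[of c b d a] Lanti1[of c a d b] Lanti2[of a c d b]
      Lanti1[of d b a c] Lanti2[of b d a c] Lanti1[of d a b c]
    by linarith
qed


definition B where "B x y z p q r = (\<Sum>m\<in>UNIV. R x y z m * L p q r m)"

lemma B_anti: "B x y z p q r = - B y x z p q r"
  unfolding B_def by (subst anti) (simp add: sum_negf)

lemma B_bian: "B x y z p q r + B y z x p q r + B z x y p q r = 0"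
proof -
  have "B x y z p q r + B y z x p q r + B z x y p q r
      = (\<Sum>m\<in>UNIV. (R x y z m + R y z x m + R z x y m) * L p q r m)"
    unfolding B_def by (simp add: sum.distrib algebra_simps)
  also have "\<dots> = 0" by (simp add: bian)
  finally show ?thesis .
qed

lemma B_swap: "B x y z p q r = B p q r x y z"
proof -
  have "B x y z p q r = (\<Sum>m\<in>UNIV. \<Sum>e\<in>UNIV. R x y z m * R p q r e * G e m)"
    unfolding B_def L_def by (simp add: sum_distrib_left mult.assoc)
  also have "\<dots> = (\<Sum>e\<in>UNIV. \<Sum>m\<in>UNIV. R x y z m * R p q r e * G e m)"
    by (rule sum.swap)
  also have "\<dots> = B p q r x y z"
    unfolding B_def L_def by (simp add: sum_distrib_left mult.assoc mult.commute mult.left_commute Gsym)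
  finally show ?thesis .
qed

lemma sl1: "(\<Sum>m\<in>UNIV. R x y z m * L m q r s) = - B x y z r s q"
  unfolding B_def
  by (simp add: sum_negf[symmetric], rule sum.cong, simp, metis Lpair Lanti2 mult_minus_right)

lemma sl2: "(\<Sum>m\<in>UNIV. R x y z m * L q m r s) = B x y z r s q"
  unfolding B_def by (rule sum.cong, simp, metis Lpair)

lemma sl3: "(\<Sum>m\<in>UNIV. R x y z m * L q r m s) = - B x y z q r s"
  unfolding B_def
  by (simp add: sum_negf[symmetric], rule sum.cong, simp, metis Lanti2 mult_minus_right)

lemma sl3': "(\<Sum>m\<in>UNIV. L p q m s * R x y z m) = - B x y z p q s"
  unfolding B_def
  by (simp add: sum_negf[symmetric], rule sum.cong, simp, metis Lanti2 mult_minus_right mult.commute)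

lemma semiB: "- B a b c e f d + B a b d e f c - B a b e c d f + B a b f c d e = 0"
proof -
  have "(\<Sum>m\<in>UNIV. R a b c m * L m d e f) + (\<Sum>m\<in>UNIV. R a b d m * L c m e f)
      + (\<Sum>m\<in>UNIV. R a b e m * L c d m f) + (\<Sum>m\<in>UNIV. R a b f m * L c d e m) = 0"
    using semi[of a b c d e f] by (simp add: sum.distrib)
  then show ?thesis by (simp add: sl1 sl2 sl3 B_def[symmetric])
qed

lemma low1: "(\<Sum>f\<in>UNIV. (\<Sum>m\<in>UNIV. P m * R (p m) (q m) (r m) f) * G f f') = (\<Sum>m\<in>UNIV. P m * L (p m) (q m) (r m) f')"
proof -
  have "(\<Sum>f\<in>UNIV. (\<Sum>m\<in>UNIV. P m * R (p m) (q m) (r m) f) * G f f')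
      = (\<Sum>f\<in>UNIV. \<Sum>m\<in>UNIV. P m * (R (p m) (q m) (r m) f * G f f'))"
    by (simp add: sum_distrib_right mult.assoc)
  also have "\<dots> = (\<Sum>m\<in>UNIV. \<Sum>f\<in>UNIV. P m * (R (p m) (q m) (r m) f * G f f'))" by (rule sum.swap)
  also have "\<dots> = (\<Sum>m\<in>UNIV. P m * L (p m) (q m) (r m) f')" by (simp add: L_def sum_distrib_left)
  finally show ?thesis .
qed

lemma low2: "(\<Sum>f\<in>UNIV. (\<Sum>m\<in>UNIV. R p q m f * P m) * G f f') = (\<Sum>m\<in>UNIV. L p q m f' * P m)"
proof -
  have "(\<Sum>f\<in>UNIV. (\<Sum>m\<in>UNIV. R p q m f * P m) * G f f')
      = (\<Sum>f\<in>UNIV. \<Sum>m\<in>UNIV. P m * (R p q m f * G f f'))"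
    by (simp add: sum_distrib_left sum_distrib_right mult_ac)
  also have "\<dots> = (\<Sum>m\<in>UNIV. \<Sum>f\<in>UNIV. P m * (R p q m f * G f f'))" by (rule sum.swap)
  also have "\<dots> = (\<Sum>m\<in>UNIV. L p q m f' * P m)" by (simp add: L_def sum_distrib_left mult.commute)
  finally show ?thesis .
qed

lemma lower_zero:
  assumes "\<And>f'. (\<Sum>f\<in>UNIV. X f * G f f') = 0"
  shows "X f = 0"
proof -
  have e: "\<And>f''. X f'' * (if f'' = f then 1 else 0) = (if f'' = f then X f else 0)" by simp
  have "X f = (\<Sum>f''\<in>UNIV. X f'' * (if f'' = f then 1 else 0))" by (simp only: e sum.delta) simp
  also have "\<dots> = (\<Sum>f''\<in>UNIV. \<Sum>f'\<in>UNIV. X f'' * G f'' f' * Gi f' f)"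
    by (simp add: GGi[symmetric] sum_distrib_left mult.assoc)
  also have "\<dots> = (\<Sum>f'\<in>UNIV. (\<Sum>f''\<in>UNIV. X f'' * G f'' f') * Gi f' f)"
    by (subst sum.swap) (simp add: sum_distrib_right)
  also have "\<dots> = 0" by (simp add: assms)
  finally show ?thesis .
qed

lemma E1: "(\<Sum>m\<in>UNIV. R a b c m * R d m e f + R b c d m * R a m e f
       + R c d a m * R b m e f + R d a b m * R c m e f
       - R a c e m * R b d m f + R a c m f * R b d e m) = 0"
proof (rule lower_zero[where X = "\<lambda>f. (\<Sum>m\<in>UNIV. R a b c m * R d m e f + R b c d m * R a m e f
       + R c d a m * R b m e f + R d a b m * R c m e f
       - R a c e m * R b d m f + R a c m f * R b d e m)"])
  fix f'
  have "(\<Sum>f\<in>UNIV. (\<Sum>m\<in>UNIV. R a b c m * R d m e f + R b c d m * R a m e f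
       + R c d a m * R b m e f + R d a b m * R c m e f
       - R a c e m * R b d m f + R a c m f * R b d e m) * G f f')
     = (\<Sum>f\<in>UNIV. (\<Sum>m\<in>UNIV. R a b c m * R d m e f) * G f f')
       + (\<Sum>f\<in>UNIV. (\<Sum>m\<in>UNIV. R b c d m * R a m e f) * G f f')
       + (\<Sum>f\<in>UNIV. (\<Sum>m\<in>UNIV. R c d a m * R b m e f) * G f f')
       + (\<Sum>f\<in>UNIV. (\<Sum>m\<in>UNIV. R d a b m * R c m e f) * G f f')
       - (\<Sum>f\<in>UNIV. (\<Sum>m\<in>UNIV. R a c e m * R b d m f) * G f f')
       + (\<Sum>f\<in>UNIV. (\<Sum>m\<in>UNIV. R a c m f * R b d e m) * G f f')"
    by (simp only: sum.distrib sum_subtractf distrib_right left_diff_distrib)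
  also have "\<dots> = B a b c e f' d + B b c d e f' a + B c d a e f' b + B d a b e f' c
      + B a c e b d f' - B b d e a c f'"
    unfolding low1[where P="R _ _ _"] low2
    by (simp only: sl1 sl2 sl3 sl3')
  also have "\<dots> = 0"
    using semiB[of b c a e f' d] semiB[of a c b e f' d] semiB[of a d b e f' c]
      B_bian[of a c d e f' b] B_anti[of a d c e f' b] B_swap[of a d f' b c e]
      B_anti[of a c b e f' d] B_bian[of a b c e f' d] B_swap[of a d e b c f'] B_anti[of a d b e f' c]
      B_swap[of b d e a c f']
    by linarith
  finally show "(\<Sum>f\<in>UNIV. (\<Sum>m\<in>UNIV. R a b c m * R d m e f + R b c d m * R a m e f
       + R c d a m * R b m e f + R d a b m * R c m e f
       - R a c e m * R b d m f + R a c m f * R b d e m) * G f f') = 0" .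
qed

lemma Gi_sym: "Gi i j = Gi j i"
proof -
  have g: "\<And>k. (\<Sum>l\<in>UNIV. G l k * Gi l j) = (if k = j then 1 else 0)"
  proof -
    fix k
    have "(\<Sum>l\<in>UNIV. G l k * Gi l j) = (\<Sum>l\<in>UNIV. G k l * Gi l j)"
      by (rule sum.cong) (auto simp: Gsym[of _ k])
    then show "(\<Sum>l\<in>UNIV. G l k * Gi l j) = (if k = j then 1 else 0)" using GGi[of k j] by simp
  qed
  have "(\<Sum>k\<in>UNIV. \<Sum>l\<in>UNIV. Gi k i * G l k * Gi l j) = (\<Sum>l\<in>UNIV. Gi l j * (\<Sum>k\<in>UNIV. G l k * Gi k i))"
    by (subst sum.swap) (simp add: sum_distrib_left mult_ac)
  also have "\<dots> = Gi i j" by (simp add: GGi if_distrib cong: if_cong)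
  finally have 1: "(\<Sum>k\<in>UNIV. \<Sum>l\<in>UNIV. Gi k i * G l k * Gi l j) = Gi i j" .
  have "(\<Sum>k\<in>UNIV. \<Sum>l\<in>UNIV. Gi k i * G l k * Gi l j) = (\<Sum>k\<in>UNIV. Gi k i * (\<Sum>l\<in>UNIV. G l k * Gi l j))"
    by (simp add: sum_distrib_left mult_ac)
  also have "\<dots> = Gi j i" by (simp add: g if_distrib cong: if_cong)
  finally show ?thesis using 1 by simp
qed

lemma R_from_L: "R x y z w = (\<Sum>f\<in>UNIV. L x y z f * Gi f w)"
proof -
  have "(\<Sum>f\<in>UNIV. L x y z f * Gi f w) = (\<Sum>f\<in>UNIV. \<Sum>e\<in>UNIV. R x y z e * (G e f * Gi f w))"
    by (simp add: L_def sum_distrib_right sum_distrib_left mult_ac)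
  also have "\<dots> = (\<Sum>e\<in>UNIV. R x y z e * (\<Sum>f\<in>UNIV. G e f * Gi f w))"
    by (subst sum.swap) (simp add: sum_distrib_left)
  also have "\<dots> = R x y z w" by (simp add: GGi if_distrib cong: if_cong)
  finally show ?thesis by simp
qed

definition Rc where "Rc x y = (\<Sum>b\<in>UNIV. R x b y b)"

lemma Rc_sym: "Rc x y = Rc y x"
proof -
  have "Rc x y = (\<Sum>b\<in>UNIV. \<Sum>f\<in>UNIV. L y f x b * Gi f b)"
    unfolding Rc_def by (subst R_from_L) (simp add: Lpair[of x _ y])
  also have "\<dots> = (\<Sum>f\<in>UNIV. \<Sum>b\<in>UNIV. L y f x b * Gi b f)"
    by (subst sum.swap) (simp add: Gi_sym)
  also have "\<dots> = Rc y x"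
    unfolding Rc_def by (subst R_from_L) simp
  finally show ?thesis .
qed

lemma semi_up: "(\<Sum>m\<in>UNIV. R a b c m * R m d e f + R a b d m * R c m e f
                 + R a b e m * R c d m f - R a b m f * R c d e m) = 0"
proof (rule lower_zero[where X = "\<lambda>f. (\<Sum>m\<in>UNIV. R a b c m * R m d e f + R a b d m * R c m e f
                 + R a b e m * R c d m f - R a b m f * R c d e m)"])
  fix f'
  have "(\<Sum>f\<in>UNIV. (\<Sum>m\<in>UNIV. R a b c m * R m d e f + R a b d m * R c m e f
                 + R a b e m * R c d m f - R a b m f * R c d e m) * G f f')
     = (\<Sum>f\<in>UNIV. (\<Sum>m\<in>UNIV. R a b c m * R m d e f) * G f f')
       + (\<Sum>f\<in>UNIV. (\<Sum>m\<in>UNIV. R a b d m * R c m e f) * G f f')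
       + (\<Sum>f\<in>UNIV. (\<Sum>m\<in>UNIV. R a b e m * R c d m f) * G f f')
       - (\<Sum>f\<in>UNIV. (\<Sum>m\<in>UNIV. R a b m f * R c d e m) * G f f')"
    by (simp only: sum.distrib sum_subtractf distrib_right left_diff_distrib)
  also have "\<dots> = (\<Sum>m\<in>UNIV. R a b c m * L m d e f') + (\<Sum>m\<in>UNIV. R a b d m * L c m e f')
       + (\<Sum>m\<in>UNIV. R a b e m * L c d m f') - (\<Sum>m\<in>UNIV. L a b m f' * R c d e m)"
    unfolding low1[where P="R _ _ _"] low2 by (rule refl)
  also have "\<dots> = (\<Sum>m\<in>UNIV. R a b c m * L m d e f') + (\<Sum>m\<in>UNIV. R a b d m * L c m e f')
       + (\<Sum>m\<in>UNIV. R a b e m * L c d m f') + (\<Sum>m\<in>UNIV. R a b f' m * L c d e m)"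
    unfolding sl3' using B_swap[of c d e a b f'] by (simp add: B_def)
  also have "\<dots> = 0" using semi[of a b c d e f'] by (simp add: sum.distrib)
  finally show "(\<Sum>f\<in>UNIV. (\<Sum>m\<in>UNIV. R a b c m * R m d e f + R a b d m * R c m e f
                 + R a b e m * R c d m f - R a b m f * R c d e m) * G f f') = 0" .
qed

lemma R_Rc: "(\<Sum>m\<in>UNIV. R a b c m * Rc m e) + (\<Sum>m\<in>UNIV. R a b e m * Rc c m) = 0"
proof -
  have 0: "(\<Sum>d\<in>UNIV. \<Sum>m\<in>UNIV. R a b c m * R m d e d + R a b d m * R c m e d
                 + R a b e m * R c d m d - R a b m d * R c d e m) = 0"
    using semi_up by simp
  have 1: "(\<Sum>d\<in>UNIV. \<Sum>m\<in>UNIV. R a b c m * R m d e d) = (\<Sum>m\<in>UNIV. R a b c m * Rc m e)"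
    by (subst sum.swap) (simp add: Rc_def sum_distrib_left)
  have 2: "(\<Sum>d\<in>UNIV. \<Sum>m\<in>UNIV. R a b e m * R c d m d) = (\<Sum>m\<in>UNIV. R a b e m * Rc c m)"
    by (subst sum.swap) (simp add: Rc_def sum_distrib_left)
  have 3: "(\<Sum>d\<in>UNIV. \<Sum>m\<in>UNIV. R a b m d * R c d e m) = (\<Sum>d\<in>UNIV. \<Sum>m\<in>UNIV. R a b d m * R c m e d)"
    by (rule sum.swap)
  show ?thesis using 0 1 2 3 by (simp add: sum.distrib sum_subtractf)
qed

definition T where "T w x y z = (\<Sum>m\<in>UNIV. Rc w m * R x y z m)"

lemma T_RicR: "T w x y z + T z x y w = 0"
  using R_Rc[of x y z w] unfolding T_def by (simp add: Rc_sym mult.commute)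

lemma T_anti: "T w x y z = - T w y x z"
  unfolding T_def by (subst anti) (simp add: sum_negf)

lemma T_bian: "T w x y z + T w y z x + T w z x y = 0"
proof -
  have "T w x y z + T w y z x + T w z x y = (\<Sum>m\<in>UNIV. Rc w m * (R x y z m + R y z x m + R z x y m))"
    unfolding T_def by (simp add: sum.distrib algebra_simps)
  also have "\<dots> = 0" by (simp add: bian)
  finally show ?thesis .
qed

lemma E2: "(\<Sum>m\<in>UNIV. Rc a m * R b c e m + Rc b m * R c a e m + Rc c m * R a b e m) = 0"
proof -
  have "(\<Sum>m\<in>UNIV. Rc a m * R b c e m + Rc b m * R c a e m + Rc c m * R a b e m)
     = T a b c e + T b c a e + T c a b e" unfolding T_def by (simp add: sum.distrib)
  also have "\<dots> = 0" using T_RicR[of b c a e] T_RicR[of c a b e] T_RicR[of a b c e] T_bian[of e a b c]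
    by linarith
  finally show ?thesis .
qed

lemma E3: "(\<Sum>m\<in>UNIV. Rc a m * R b e c m - Rc b m * R a c e m
       + Rc c m * R e b a m - Rc e m * R c a b m) = 0"
proof -
  have "(\<Sum>m\<in>UNIV. Rc a m * R b e c m - Rc b m * R a c e m
       + Rc c m * R e b a m - Rc e m * R c a b m)
     = T a b e c - T b a c e + T c e b a - T e c a b" unfolding T_def by (simp add: sum.distrib sum_subtractf)
  also have "\<dots> = 0" using T_RicR[of a b e c] T_RicR[of a c e b] T_RicR[of b e a c] T_RicR[of c a b e]
      T_RicR[of a b c e] T_RicR[of a e b c] T_bian[of c a b e] T_bian[of b a c e] T_bian[of a b c e]
      T_bian[of e a b c]
    by linarith
  finally show ?thesis .
qed

end


lemma contract_lemma:
  fixes Gi G :: "'n::finite \<Rightarrow> 'n \<Rightarrow> real"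
  assumes "\<And>e. (\<Sum>k\<in>UNIV. Gi k e * G k d) = (if e = d then 1 else 0)"
  shows "(\<Sum>k\<in>UNIV. (c * (\<Sum>e\<in>UNIV. Gi k e * X e)) * G k d) = c * X d"
proof -
  have "(\<Sum>k\<in>UNIV. (c * (\<Sum>e\<in>UNIV. Gi k e * X e)) * G k d) = (\<Sum>k\<in>UNIV. \<Sum>e\<in>UNIV. c * X e * (Gi k e * G k d))"
    by (simp add: sum_distrib_left sum_distrib_right mult_ac)
  also have "\<dots> = (\<Sum>e\<in>UNIV. \<Sum>k\<in>UNIV. c * X e * (Gi k e * G k d))" by (rule sum.swap)
  also have "\<dots> = c * (\<Sum>e\<in>UNIV. X e * (\<Sum>k\<in>UNIV. Gi k e * G k d))"
    by (simp add: sum_distrib_left mult_ac)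
  also have "\<dots> = c * (\<Sum>e\<in>UNIV. (if e = d then X d else 0))"
    by (intro arg_cong[where f="\<lambda>t. c * t"] sum.cong refl) (simp add: assms)
  also have "\<dots> = c * X d" by simp
  finally show ?thesis .
qed

locale rmetric =
  fixes U :: "(real^'n::finite) set" and g :: "real^'n \<Rightarrow> real^'n^'n"
  assumes rm: "riemannian_metric_on U g"
begin

lemma openU: "open U" using rm unfolding riemannian_metric_on_def by blast

lemma gsm: "smooth_on U (\<lambda>y. g y $ i $ j)" using rm unfolding riemannian_metric_on_def by blast

lemma gsym: assumes "y \<in> U" shows "g y $ i $ j = g y $ j $ i"
proof -
  have t: "transpose (g y) = g y" using rm assms unfolding riemannian_metric_on_def by blast
  have "g y $ i $ j = transpose (g y) $ i $ j" by (simp only: t)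
  also have "\<dots> = g y $ j $ i" by (simp add: transpose_def)
  finally show ?thesis .
qed

lemma ginv_inv: "y \<in> U \<Longrightarrow> invertible (g y)"
  using rm pd_invertible unfolding riemannian_metric_on_def by blast

lemma GGi: "y \<in> U \<Longrightarrow> (\<Sum>k\<in>UNIV. g y $ i $ k * ginv g y k j) = (if i = j then 1 else 0)"
  unfolding ginv_def using inv_sum1(1)[OF ginv_inv] by blast

lemma GiG: "y \<in> U \<Longrightarrow> (\<Sum>k\<in>UNIV. ginv g y i k * g y $ k $ j) = (if i = j then 1 else 0)"
  unfolding ginv_def using inv_sum1(2)[OF ginv_inv] by blast

lemma ginv_smooth: "smooth_on U (\<lambda>y. ginv g y i j)"
proof (rule smooth_cong[OF openU])
  let ?M = "\<lambda>y. (\<chi> r s. if s = i then (if r = j then 1 else 0) else g y $ r $ s) :: real^'n^'n"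
  have m: "smooth_on U (\<lambda>y. ?M y $ r $ s)" for r s
    by (cases "s = i") (simp_all add: gsm smooth_const[OF openU])
  show "smooth_on U (\<lambda>y. det (?M y) / det (g y))"
    using smooth_divide[OF openU smooth_det[OF openU m] smooth_det[OF openU gsm]]
      ginv_inv invertible_det_nz by blast
  show "\<And>y. y \<in> U \<Longrightarrow> det (?M y) / det (g y) = ginv g y i j"
    unfolding ginv_def using inv_cramer[OF ginv_inv] by simp
qed

lemmas sm_intros = smooth_add[OF openU] smooth_sub[OF openU] smooth_mult[OF openU]
  smooth_sum[OF openU finite_class.finite_UNIV] smooth_partial smooth_const[OF openU] gsm ginv_smooth

lemma chr_smooth: "smooth_on U (\<lambda>y. christoffel g y a b c)"
  unfolding christoffel_def by (intro sm_intros)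

lemma Rup_smooth: "smooth_on U (\<lambda>y. Rup g y a b c d)"
  unfolding Rup_def by (intro sm_intros chr_smooth)

lemma Rdown_smooth: "smooth_on U (\<lambda>y. Rdown g y a b c d)"
  unfolding Rdown_def by (intro sm_intros Rup_smooth)

lemma dg_sym: "y \<in> U \<Longrightarrow> partial e (\<lambda>y. g y $ a $ b) y = partial e (\<lambda>y. g y $ b $ a) y"
  by (rule partial_cong[OF openU]) (auto simp: gsym)

lemma chr_sym: "y \<in> U \<Longrightarrow> christoffel g y a b c = christoffel g y b a c"
  unfolding christoffel_def using dg_sym[of y _ a b] by (simp add: algebra_simps)

lemma dchr_sym: "y \<in> U \<Longrightarrow> partial e (\<lambda>y. christoffel g y a b c) y = partial e (\<lambda>y. christoffel g y b a c) y"
  by (rule partial_cong[OF openU]) (auto simp: chr_sym)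

lemma compat3:
  assumes y: "y \<in> U"
  shows "cov_deriv g (\<lambda>y l. g y $ (l!0) $ (l!1)) y [b, c, d] = 0"
proof -
  have inv: "\<And>e d. (\<Sum>k\<in>UNIV. ginv g y k e * g y $ k $ d) = (if e = d then 1 else 0)"
  proof -
    fix e d
    have "(\<Sum>k\<in>UNIV. ginv g y k e * g y $ k $ d) = (\<Sum>k\<in>UNIV. g y $ d $ k * ginv g y k e)"
      by (rule sum.cong) (auto simp: gsym[OF y, of _ d])
    then show "(\<Sum>k\<in>UNIV. ginv g y k e * g y $ k $ d) = (if e = d then 1 else 0)"
      using GGi[OF y, of d e] by auto
  qed
  have S1: "(\<Sum>k\<in>UNIV. christoffel g y b c k * g y $ k $ d) = 1/2 * (partial b (\<lambda>y. g y $ c $ d) y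
     + partial c (\<lambda>y. g y $ b $ d) y - partial d (\<lambda>y. g y $ b $ c) y)"
    unfolding christoffel_def by (rule contract_lemma[OF inv])
  have "(\<Sum>k\<in>UNIV. christoffel g y b d k * g y $ c $ k) = (\<Sum>k\<in>UNIV. christoffel g y b d k * g y $ k $ c)"
    by (rule sum.cong) (auto simp: gsym[OF y, of c])
  also have "\<dots> = 1/2 * (partial b (\<lambda>y. g y $ d $ c) y
     + partial d (\<lambda>y. g y $ b $ c) y - partial c (\<lambda>y. g y $ b $ d) y)"
    unfolding christoffel_def by (rule contract_lemma[OF inv])
  finally have S2: "(\<Sum>k\<in>UNIV. christoffel g y b d k * g y $ c $ k) = 1/2 * (partial b (\<lambda>y. g y $ d $ c) y
     + partial d (\<lambda>y. g y $ b $ c) y - partial c (\<lambda>y. g y $ b $ d) y)" .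
  have "cov_deriv g (\<lambda>y l. g y $ (l!0) $ (l!1)) y [b, c, d] = partial b (\<lambda>y. g y $ c $ d) y
     - ((\<Sum>k\<in>UNIV. christoffel g y b c k * g y $ k $ d) + (\<Sum>k\<in>UNIV. christoffel g y b d k * g y $ c $ k))"
    by (simp add: cov_deriv_Cons numeral_2_eq_2)
  then show ?thesis using S1 S2 dg_sym[OF y, of b d c] by (simp add: field_simps)
qed

lemma compat:
  assumes "y \<in> U" "length l = 3"
  shows "cov_deriv g (\<lambda>y l. g y $ (l!0) $ (l!1)) y l = 0"
proof -
  obtain b c d where "l = [b, c, d]" using assms(2)
    by (metis (no_types, lifting) length_0_conv length_Suc_conv numeral_3_eq_3)
  then show ?thesis using compat3[OF assms(1)] by simp
qed


lemma Tg_smooth: "smooth_on U (\<lambda>y. g y $ (l!0) $ (l!1))" by (rule gsm)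

lemma Lanti2:
  assumes x: "x \<in> U"
  shows "Rdown g x a b c d = - Rdown g x a b d c"
proof -
  let ?Tg = "\<lambda>y (l::'n list). g y $ (l!0) $ (l!1)"
  have RI: "cov_deriv g (cov_deriv g ?Tg) x (a # b # [c, d]) - cov_deriv g (cov_deriv g ?Tg) x (b # a # [c, d])
    = - (\<Sum>p<length [c, d]. \<Sum>j\<in>UNIV. Rup g x a b ([c, d]!p) j * ?Tg x ([c, d][p := j]))"
    by (rule ricci_identity[OF smooth_diff_at[OF chr_smooth x] smooth_diff_at[OF Tg_smooth x]
          smooth_diff_at[OF smooth_partial[OF Tg_smooth] x] schwarz[OF openU Tg_smooth x] chr_sym[OF x]])
  have zero: "cov_deriv g (cov_deriv g ?Tg) x (e # l) = 0" if l: "length l = 3" for e l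
  proof -
    have "partial e (\<lambda>y. cov_deriv g ?Tg y l) x = partial e (\<lambda>y. 0) x"
      by (rule partial_cong[OF openU x], rule compat[OF _ l])
    moreover have "cov_deriv g ?Tg x (l[p := k]) = 0" for p k
      by (rule compat[OF x]) (simp add: l)
    ultimately show ?thesis by (simp add: cov_deriv_Cons partial_const)
  qed
  have "0 = - ((\<Sum>j\<in>UNIV. Rup g x a b c j * g x $ j $ d) + (\<Sum>j\<in>UNIV. Rup g x a b d j * g x $ c $ j))"
    using RI zero[of "[b, c, d]" a] zero[of "[a, c, d]" b] by (simp add: numeral_2_eq_2)
  moreover have "(\<Sum>j\<in>UNIV. Rup g x a b d j * g x $ c $ j) = Rdown g x a b d c"
    unfolding Rdown_def by (rule sum.cong) (auto simp: gsym[OF x, of c])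
  ultimately show ?thesis unfolding Rdown_def by simp
qed

lemma Rup_anti: "Rup g x a b c d = - Rup g x b a c d"
  unfolding Rup_def by (simp add: mult.commute)

lemma bianchi:
  assumes x: "x \<in> U"
  shows "Rup g x a b c d + Rup g x b c a d + Rup g x c a b d = 0"
  unfolding Rup_def using chr_sym[OF x] dchr_sym[OF x] by (simp add: mult.commute)

lemma semi:
  assumes ss: "semisymmetric_on U g" and x: "x \<in> U"
  shows "(\<Sum>m\<in>UNIV. Rup g x a b c m * Rdown g x m d e f + Rup g x a b d m * Rdown g x c m e f
                 + Rup g x a b e m * Rdown g x c d m f + Rup g x a b f m * Rdown g x c d e m) = 0"
proof -
  let ?T = "\<lambda>y (l::'n list). Rdown g y (l!0) (l!1) (l!2) (l!3)"
  have Tsm: "smooth_on U (\<lambda>y. ?T y l)" for l by (rule Rdown_smooth)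
  have RI: "cov_deriv g (cov_deriv g ?T) x (a # b # [c, d, e, f]) - cov_deriv g (cov_deriv g ?T) x (b # a # [c, d, e, f])
    = - (\<Sum>p<length [c, d, e, f]. \<Sum>j\<in>UNIV. Rup g x a b ([c, d, e, f]!p) j * ?T x ([c, d, e, f][p := j]))"
    by (rule ricci_identity[OF smooth_diff_at[OF chr_smooth x] smooth_diff_at[OF Tsm x]
          smooth_diff_at[OF smooth_partial[OF Tsm] x] schwarz[OF openU Tsm x] chr_sym[OF x]])
  have "cov_deriv g (cov_deriv g ?T) x [a, b, c, d, e, f] - cov_deriv g (cov_deriv g ?T) x [b, a, c, d, e, f] = 0"
    using ss x unfolding semisymmetric_on_def Let_def by blast
  then have "(\<Sum>p<length [c, d, e, f]. \<Sum>j\<in>UNIV. Rup g x a b ([c, d, e, f]!p) j * ?T x ([c, d, e, f][p := j])) = 0"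
    using RI by simp
  then show ?thesis by (simp add: numeral_eq_Suc sum.distrib add.assoc)
qed

end


theorem mainTheorem8:
  fixes U :: "(real^'n::finite) set" and g :: "real^'n \<Rightarrow> real^'n^'n"
  assumes "riemannian_metric_on U g"
    and "semisymmetric_on U g"
  shows "\<forall>x\<in>U. \<forall>a b c d e f.
    (\<Sum>m\<in>UNIV. Rup g x a b c m * Rup g x d m e f + Rup g x b c d m * Rup g x a m e f
       + Rup g x c d a m * Rup g x b m e f + Rup g x d a b m * Rup g x c m e f
       - Rup g x a c e m * Rup g x b d m f + Rup g x a c m f * Rup g x b d e m) = 0
    \<and> (\<Sum>m\<in>UNIV. Ric g x a m * Rup g x b c e m + Ric g x b m * Rup g x c a e m
       + Ric g x c m * Rup g x a b e m) = 0
    \<and> (\<Sum>m\<in>UNIV. Ric g x a m * Rup g x b e c m - Ric g x b m * Rup g x a c e m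
       + Ric g x c m * Rup g x e b a m - Ric g x e m * Rup g x c a b m) = 0"
proof (intro ballI allI)
  fix x a b c d e f assume x: "x \<in> U"
  interpret M: rmetric U g by (rule rmetric.intro) (rule assms(1))
  interpret C: curv_alg "Rup g x" "Rdown g x" "\<lambda>i j. g x $ i $ j" "ginv g x"
  proof (unfold_locales)
    show "\<And>a b c d. Rup g x a b c d = - Rup g x b a c d" by (rule M.Rup_anti)
    show "\<And>a b c d. Rup g x a b c d + Rup g x b c a d + Rup g x c a b d = 0" by (rule M.bianchi[OF x])
    show "\<And>i j. g x $ i $ j = g x $ j $ i" by (rule M.gsym[OF x])
    show "\<And>i j. (\<Sum>k\<in>UNIV. g x $ i $ k * ginv g x k j) = (if i = j then 1 else 0)" by (rule M.GGi[OF x])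
    show "\<And>i j. (\<Sum>k\<in>UNIV. ginv g x i k * g x $ k $ j) = (if i = j then 1 else 0)" by (rule M.GiG[OF x])
    show "\<And>a b c d. Rdown g x a b c d = (\<Sum>e\<in>UNIV. Rup g x a b c e * g x $ e $ d)" by (rule Rdown_def)
    show "\<And>a b c d. Rdown g x a b c d = - Rdown g x a b d c" by (rule M.Lanti2[OF x])
    show "\<And>a b c d e f. (\<Sum>m\<in>UNIV. Rup g x a b c m * Rdown g x m d e f + Rup g x a b d m * Rdown g x c m e f
                 + Rup g x a b e m * Rdown g x c d m f + Rup g x a b f m * Rdown g x c d e m) = 0"
      by (rule M.semi[OF assms(2) x])
  qed
  have Ric: "\<And>a c. Ric g x a c = C.Rc a c" unfolding Ric_def C.Rc_def ..
  show "(\<Sum>m\<in>UNIV. Rup g x a b c m * Rup g x d m e f + Rup g x b c d m * Rup g x a m e f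
       + Rup g x c d a m * Rup g x b m e f + Rup g x d a b m * Rup g x c m e f
       - Rup g x a c e m * Rup g x b d m f + Rup g x a c m f * Rup g x b d e m) = 0
    \<and> (\<Sum>m\<in>UNIV. Ric g x a m * Rup g x b c e m + Ric g x b m * Rup g x c a e m
       + Ric g x c m * Rup g x a b e m) = 0
    \<and> (\<Sum>m\<in>UNIV. Ric g x a m * Rup g x b e c m - Ric g x b m * Rup g x a c e m
       + Ric g x c m * Rup g x e b a m - Ric g x e m * Rup g x c a b m) = 0"
    unfolding Ric using C.E1 C.E2 C.E3 by blast
qed

end
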